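(* Let $p,s,t$ be parameters with $p\neq0$, and let $a_n=a_n(p,s,t)$ be defined by $a_0=1$, $a_1=p$ and $a_n=s\,a_{n-1}+t\sum_{k=0}^{n-3}a_{k+1}a_{n-k-2}$ for $n\ge2$. Then the sequence $\left(\frac1p a_{n+1}\right)_{n\ge0}$ has generating function $\mathcal{J}(s,s,s,\ldots;pt,pt,pt,\ldots)$, and its Hankel transform is $\left((pt)^{\binom{n+1}{2}}\right)_{n\ge0}$.
   Context: $\mathcal{J}(\alpha_0,\alpha_1,\ldots;\beta_1,\beta_2,\ldots)$ denotes the power series given by the continued fraction $\cfrac{1}{1-\alpha_0x-\cfrac{\beta_1x^2}{1-\alpha_1x-\cfrac{\beta_2x^2}{1-\alpha_2x-\cdots}}}$. The Hankel transform of a sequence $(b_n)_{n\ge0}$ is the sequence $h_n=\det(b_{i+j})_{0\le i,j\le n}$, $n\ge0$. *)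

theory Defs
  imports "HOL-Computational_Algebra.Formal_Power_Series" "Jordan_Normal_Form.Determinant"
begin

function aseq :: "'a::field \<Rightarrow> 'a \<Rightarrow> 'a \<Rightarrow> nat \<Rightarrow> 'a" where
  "aseq p s t n =
     (if n = 0 then 1
      else if n = 1 then p
      else s * aseq p s t (n - 1) + t * (\<Sum>k\<in>{0..<n-2}. aseq p s t (k + 1) * aseq p s t (n - k - 2)))"
  by auto
termination
  by (relation "measure (\<lambda>(p, s, t, n). n)") auto

text \<open>Truncated J-fraction: jtrunc alpha beta m k is the continued fraction
  1/(1 - alpha_k x - beta_(k+1) x^2/(1 - alpha_(k+1) x - ...)) cut off after m levels
  (the innermost remaining tail replaced by 1).\<close>
fun jtrunc :: "(nat \<Rightarrow> 'a::field) \<Rightarrow> (nat \<Rightarrow> 'a) \<Rightarrow> nat \<Rightarrow> nat \<Rightarrow> 'a fps" where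
  "jtrunc \<alpha> \<beta> 0 k = 1"
| "jtrunc \<alpha> \<beta> (Suc m) k =
     inverse (1 - fps_const (\<alpha> k) * fps_X - fps_const (\<beta> (Suc k)) * fps_X ^ 2 * jtrunc \<alpha> \<beta> m (Suc k))"

definition is_Jfrac :: "(nat \<Rightarrow> 'a::field) \<Rightarrow> (nat \<Rightarrow> 'a) \<Rightarrow> 'a fps \<Rightarrow> bool" where
  "is_Jfrac \<alpha> \<beta> F \<longleftrightarrow> (\<lambda>m. jtrunc \<alpha> \<beta> m 0) \<longlonglongrightarrow> F"

definition hankel :: "(nat \<Rightarrow> 'a::comm_ring_1) \<Rightarrow> nat \<Rightarrow> 'a" where
  "hankel b n = det (mat (Suc n) (Suc n) (\<lambda>(i, j). b (i + j)))"

end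

theory Submission
  imports Defs
begin



declare aseq.simps[simp del]

lemma aseq0: "aseq p s t 0 = 1" by (subst aseq.simps) simp
lemma aseq1: "aseq p s t (Suc 0) = p" by (subst aseq.simps) simp
lemma aseqSS: "aseq p s t (Suc (Suc n)) = s * aseq p s t (Suc n) + t * (\<Sum>k<n. aseq p s t (k+1) * aseq p s t (n-k))"
  by (subst aseq.simps) (simp add: atLeast0LessThan)

lemma B_eq:
  fixes p s t :: "'a::field"
  assumes p: "p \<noteq> 0"
  defines "B \<equiv> Abs_fps (\<lambda>n. aseq p s t (n + 1) / p)"
  shows "B = 1 + fps_const s * (fps_X * B) + fps_const (p*t) * (fps_X^2 * (B * B))"
proof (rule fps_ext)
  fix n
  have a: "aseq p s t (Suc j) = p * fps_nth B (j)" for j using p by (simp add: B_def)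
  show "fps_nth B (n) = fps_nth (1 + fps_const s * (fps_X * B) + fps_const (p*t) * (fps_X^2 * (B * B))) n"
  proof (cases n)
    case 0 then show ?thesis using p by (simp add: B_def aseq1)
  next
    case (Suc m)
    show ?thesis
    proof (cases m)
      case 0 then show ?thesis using p Suc by (simp add: B_def aseqSS aseq1 fps_X_power_mult_nth)
    next
      case (Suc r)
      have "fps_nth B (n) = aseq p s t (Suc (Suc (Suc r))) / p" using \<open>n = Suc m\<close> Suc by (simp add: B_def)
      also have "\<dots> = (s * (p * fps_nth B (Suc r)) + t * (\<Sum>k<Suc r. (p * fps_nth B (k)) * (p * fps_nth B ((r) - k)))) / p"
      proof -
        have e: "aseq p s t (Suc (Suc (Suc r))) = s * aseq p s t (Suc (Suc r)) + t * (\<Sum>k<Suc r. aseq p s t (k+1) * aseq p s t (Suc r-k))"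
          by (rule aseqSS)
        have ee: "(\<Sum>k<Suc r. aseq p s t (k+1) * aseq p s t (Suc r-k)) = (\<Sum>k<Suc r. (p * fps_nth B k) * (p * fps_nth B (r - k)))"
          by (rule sum.cong) (auto simp: a Suc_diff_le simp del: sum.lessThan_Suc)
        show ?thesis by (subst e, subst ee) (simp add: a)
      qed
      also have "\<dots> = s * fps_nth B (Suc r) + p * t * (\<Sum>k<Suc r. fps_nth B (k) * fps_nth B ((r) - k))"
      proof -
        have "(\<Sum>k<Suc r. p * fps_nth B k * (p * fps_nth B (r - k))) = p * p * (\<Sum>k<Suc r. fps_nth B (k) * fps_nth B ((r) - k))"
          by (simp add: sum_distrib_left mult_ac del: sum.lessThan_Suc)
        then show ?thesis using p by (simp add: field_simps del: sum.lessThan_Suc)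
      qed
      also have "\<dots> = s * fps_nth B (Suc r) + p * t * fps_nth (B * B) r"
        by (simp only: fps_mult_nth atLeast0AtMost lessThan_Suc_atMost)
      also have "\<dots> = fps_nth (1 + fps_const s * (fps_X * B) + fps_const (p*t) * (fps_X^2 * (B * B))) n"
        using \<open>n = Suc m\<close> Suc by (simp add: fps_X_power_mult_nth del: fps_mult_nth)
      finally show ?thesis .
    qed
  qed
qed



lemma zp_mult1:
  fixes f g :: "'a::comm_ring_1 fps"
  assumes "\<And>i. i < N \<Longrightarrow> fps_nth f i = 0" "n < N"
  shows "fps_nth (g * f) n = 0"
  unfolding fps_mult_nth using assms by (intro sum.neutral) auto

lemma B0:
  fixes B :: "'a::field fps"
  assumes Beq: "B = 1 + fps_const s * (fps_X * B) + fps_const c * (fps_X^2 * (B * B))"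
  shows "fps_nth B 0 = 1"
proof -
  have "fps_nth B 0 = fps_nth (1 + fps_const s * (fps_X * B) + fps_const c * (fps_X^2 * (B * B))) 0"
    using Beq by simp
  also have "\<dots> = 1" by (simp add: fps_X_power_mult_nth del: fps_mult_nth)
  finally show ?thesis .
qed

lemma B_inv:
  fixes B :: "'a::field fps"
  assumes Beq: "B = 1 + fps_const s * (fps_X * B) + fps_const c * (fps_X^2 * (B * B))"
  shows "B = inverse (1 - fps_const s * fps_X - fps_const c * fps_X ^ 2 * B)"
proof -
  define E where "E = 1 - fps_const s * fps_X - fps_const c * fps_X ^ 2 * B"
  have E0: "fps_nth E 0 = 1" by (simp add: E_def fps_X_power_mult_nth del: fps_mult_nth)
  have "B * E = B - fps_const s * (fps_X * B) - fps_const c * (fps_X^2 * (B * B))"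
    by (simp add: E_def algebra_simps)
  also have "\<dots> = 1"
  proof -
    have gen: "\<And>x y z::'a fps. x = 1 + y + z \<Longrightarrow> x - y - z = 1" by (simp add: algebra_simps)
    show ?thesis by (rule gen[OF Beq])
  qed
  finally have BE: "B * E = 1" .
  have "inverse E = inverse E * (B * E)" by (simp add: BE)
  also have "\<dots> = B * (inverse E * E)" by (simp add: mult_ac)
  also have "\<dots> = B" using E0 by (simp add: inverse_mult_eq_1)
  finally show ?thesis by (simp add: E_def)
qed

lemma inv_agree:
  fixes D E :: "'a::field fps"
  assumes "fps_nth D 0 \<noteq> 0" "fps_nth E 0 \<noteq> 0" "\<And>i. i < N \<Longrightarrow> fps_nth D i = fps_nth E i" "n < N"
  shows "fps_nth (inverse D) n = fps_nth (inverse E) n"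
proof -
  have "inverse D * (E - D) * inverse E = (inverse D * E) * inverse E - (inverse D * D) * inverse E"
    by (simp add: algebra_simps)
  also have "\<dots> = inverse D - inverse E"
    using assms(1,2) by (simp add: inverse_mult_eq_1 inverse_mult_eq_1' mult.assoc)
  finally have eq: "inverse D - inverse E = inverse E * (inverse D * (E - D))" by (simp add: mult_ac)
  have z: "fps_nth (inverse D * (E - D)) i = 0" if "i < N" for i
    by (rule zp_mult1[where N=N]) (use assms(3) that in auto)
  have "fps_nth (inverse E * (inverse D * (E - D))) n = 0"
    by (rule zp_mult1[where N=N, OF z assms(4)])
  then have "fps_nth (inverse D - inverse E) n = 0" by (simp only: eq)
  then show ?thesis by simp
qed

lemma jtrunc_agree:
  fixes B :: "'a::field fps"
  assumes Beq: "B = 1 + fps_const s * (fps_X * B) + fps_const c * (fps_X^2 * (B * B))"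
  shows "\<forall>k i. i < m \<longrightarrow> fps_nth (jtrunc (\<lambda>_. s) (\<lambda>_. c) m k) i = fps_nth B i"
proof (induction m)
  case 0 then show ?case by simp
next
  case (Suc m)
  show ?case
  proof (intro allI impI)
    fix k i assume i: "i < Suc m"
    let ?J = "jtrunc (\<lambda>_. s) (\<lambda>_. c) m (Suc k)"
    define D where "D = 1 - fps_const s * fps_X - fps_const c * fps_X ^ 2 * ?J"
    define E where "E = 1 - fps_const s * fps_X - fps_const c * fps_X ^ 2 * B"
    have D0: "fps_nth D 0 = 1" by (simp add: D_def fps_X_power_mult_nth del: fps_mult_nth)
    have E0: "fps_nth E 0 = 1" by (simp add: E_def fps_X_power_mult_nth del: fps_mult_nth)
    have agr: "fps_nth D j = fps_nth E j" if "j < Suc m" for j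
    proof -
      have "D - E = fps_const c * (fps_X^2 * (B - ?J))" by (simp add: D_def E_def algebra_simps)
      then have "fps_nth D j - fps_nth E j = c * fps_nth (fps_X ^ 2 * (B - ?J)) j"
        by (metis fps_sub_nth fps_mult_left_const_nth)
      also have "\<dots> = 0" using Suc.IH that by (auto simp: fps_X_power_mult_nth)
      finally show ?thesis by simp
    qed
    have "fps_nth (jtrunc (\<lambda>_. s) (\<lambda>_. c) (Suc m) k) i = fps_nth (inverse D) i"
      by (simp add: D_def)
    also have "\<dots> = fps_nth (inverse E) i"
      by (rule inv_agree[where N="Suc m"]) (use D0 E0 agr i in auto)
    also have "\<dots> = fps_nth B i" using B_inv[OF Beq] by (simp add: E_def)
    finally show "fps_nth (jtrunc (\<lambda>_. s) (\<lambda>_. c) (Suc m) k) i = fps_nth B i" .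
  qed
qed

lemma jfrac_B:
  fixes B :: "'a::field fps"
  assumes Beq: "B = 1 + fps_const s * (fps_X * B) + fps_const c * (fps_X^2 * (B * B))"
  shows "is_Jfrac (\<lambda>_. s) (\<lambda>_. c) B"
  unfolding is_Jfrac_def
proof (rule tendsto_fpsI)
  fix n
  show "\<forall>\<^sub>F x in sequentially. fps_nth (jtrunc (\<lambda>_. s) (\<lambda>_. c) x 0) n = fps_nth B n"
    using jtrunc_agree[OF Beq] by (intro eventually_sequentiallyI[of "Suc n"]) auto
qed



definition LL :: "'a::field fps \<Rightarrow> nat \<Rightarrow> nat \<Rightarrow> 'a" where
  "LL B i k = fps_nth (fps_X ^ k * B ^ (Suc k)) i"

lemma LL_zero: "i < k \<Longrightarrow> LL B i k = 0"
  by (simp add: LL_def fps_X_power_mult_nth)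

lemma LL_0: "LL B i 0 = fps_nth B i"
  by (simp add: LL_def)

lemma LL_diag: "fps_nth B 0 = 1 \<Longrightarrow> LL B i i = 1"
  by (simp add: LL_def fps_X_power_mult_nth fps_nth_power_0)

lemma LL_rec:
  fixes B :: "'a::field fps"
  assumes Beq: "B = 1 + fps_const s * (fps_X * B) + fps_const c * (fps_X^2 * (B * B))"
  shows "LL B (Suc i) k = (if k = 0 then 0 else LL B i (k - 1)) + s * LL B i k + c * LL B i (Suc k)"
proof -
  define P where "P k = fps_X ^ k * B ^ k" for k
  have "fps_X ^ k * B ^ (Suc k) = P k * B" by (simp add: P_def mult_ac)
  also have "\<dots> = P k * (1 + fps_const s * (fps_X * B) + fps_const c * (fps_X^2 * (B * B)))"
    using Beq by (rule arg_cong)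
  also have "\<dots> = P k + fps_const s * (fps_X * (fps_X ^ k * B ^ (Suc k)))
      + fps_const c * (fps_X * (fps_X ^ Suc k * B ^ (Suc (Suc k))))"
    by (simp add: P_def algebra_simps power2_eq_square)
  finally have eq: "fps_X ^ k * B ^ (Suc k) = P k + fps_const s * (fps_X * (fps_X ^ k * B ^ (Suc k)))
      + fps_const c * (fps_X * (fps_X ^ Suc k * B ^ (Suc (Suc k))))" .
  have Pk: "fps_nth (P k) (Suc i) = (if k = 0 then 0 else LL B i (k - 1))"
  proof (cases k)
    case 0 then show ?thesis by (simp add: P_def)
  next
    case (Suc j)
    have "P k = fps_X * (fps_X ^ j * B ^ Suc j)" by (simp add: P_def Suc mult_ac)
    then show ?thesis by (simp add: LL_def Suc del: fps_mult_nth)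
  qed
  show ?thesis
    unfolding LL_def[of B "Suc i"] by (subst eq) (simp add: Pk LL_def del: fps_mult_nth)
qed



lemma trunc_sum:
  fixes g :: "nat \<Rightarrow> 'a::comm_monoid_add"
  assumes "\<And>k. i < k \<Longrightarrow> g k = 0" "i < M"
  shows "sum g {..<M} = sum g {..<Suc i}"
  by (rule sum.mono_neutral_right) (use assms in auto)

lemma G_step:
  fixes B :: "'a::field fps"
  assumes Beq: "B = 1 + fps_const s * (fps_X * B) + fps_const c * (fps_X^2 * (B * B))"
  defines "Lm \<equiv> \<lambda>i k. if k = 0 then 0 else LL B i (k - 1)"
  shows "(\<Sum>k<Suc (Suc i). LL B (Suc i) k * LL B j k * c ^ k)
       = (\<Sum>k<Suc i. LL B i k * LL B (Suc j) k * c ^ k)"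
proof -
  let ?L = "LL B"
  have rec: "?L (Suc i) k = Lm i k + s * ?L i k + c * ?L i (Suc k)" for i k
    using LL_rec[OF Beq] by (simp add: Lm_def)
  have "(\<Sum>k<Suc (Suc i). ?L (Suc i) k * ?L j k * c ^ k)
     = (\<Sum>k<Suc (Suc i). Lm i k * ?L j k * c ^ k) + (\<Sum>k<Suc (Suc i). ?L i k * (s * ?L j k * c ^ k))
       + (\<Sum>k<Suc (Suc i). c * ?L i (Suc k) * ?L j k * c ^ k)"
    by (simp add: rec sum.distrib algebra_simps del: sum.lessThan_Suc)
  also have "(\<Sum>k<Suc (Suc i). Lm i k * ?L j k * c ^ k) = (\<Sum>k<Suc i. ?L i k * (c * ?L j (Suc k) * c ^ k))"
    by (subst sum.lessThan_Suc_shift) (simp add: Lm_def mult_ac del: sum.lessThan_Suc)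
  also have "(\<Sum>k<Suc (Suc i). ?L i k * (s * ?L j k * c ^ k)) = (\<Sum>k<Suc i. ?L i k * (s * ?L j k * c ^ k))"
    by (rule trunc_sum) (auto simp: LL_zero)
  also have "(\<Sum>k<Suc (Suc i). c * ?L i (Suc k) * ?L j k * c ^ k) = (\<Sum>k<Suc (Suc (Suc i)). ?L i k * (Lm j k * c ^ k))"
    by (subst (2) sum.lessThan_Suc_shift) (simp add: Lm_def mult_ac del: sum.lessThan_Suc)
  also have "\<dots> = (\<Sum>k<Suc i. ?L i k * (Lm j k * c ^ k))"
    by (rule trunc_sum) (auto simp: LL_zero)
  also have "(\<Sum>k<Suc i. ?L i k * (c * ?L j (Suc k) * c ^ k)) + (\<Sum>k<Suc i. ?L i k * (s * ?L j k * c ^ k))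
      + (\<Sum>k<Suc i. ?L i k * (Lm j k * c ^ k)) = (\<Sum>k<Suc i. ?L i k * ?L (Suc j) k * c ^ k)"
    by (simp add: rec sum.distrib[symmetric] algebra_simps del: sum.lessThan_Suc)
  finally show ?thesis .
qed

lemma G_eq:
  fixes B :: "'a::field fps"
  assumes Beq: "B = 1 + fps_const s * (fps_X * B) + fps_const c * (fps_X^2 * (B * B))"
  shows "(\<Sum>k<Suc i. LL B i k * LL B j k * c ^ k) = fps_nth B (i + j)"
proof (induction i arbitrary: j)
  case 0 then show ?case using LL_diag[OF B0[OF Beq]] B0[OF Beq] by (simp add: LL_0)
next
  case (Suc i)
  show ?case using G_step[OF Beq, of i j] Suc.IH[of "Suc j"] by simp
qed



lemma sum_choose2: "(\<Sum>i<n. i) = n choose 2"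
  by (induction n) (auto simp: numeral_2_eq_2)

lemma prod_list_upt0: "prod_list (map f [0..<N]) = (\<Prod>i<N. f i)"
  using prod.distinct_set_conv_list[of "[0..<N]" f] by (simp add: atLeast0LessThan)

lemma hankel_B:
  fixes B :: "'a::field fps"
  assumes Beq: "B = 1 + fps_const s * (fps_X * B) + fps_const c * (fps_X^2 * (B * B))"
  shows "det (mat (Suc n) (Suc n) (\<lambda>(i, j). fps_nth B (i + j))) = c ^ (Suc n choose 2)"
proof -
  let ?N = "Suc n"
  define M1 where "M1 = mat ?N ?N (\<lambda>(i, k). LL B i k * c ^ k)"
  define M2 where "M2 = mat ?N ?N (\<lambda>(k, j). LL B j k)"
  have M1c: "M1 \<in> carrier_mat ?N ?N" and M2c: "M2 \<in> carrier_mat ?N ?N" by (auto simp: M1_def M2_def)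
  have H: "mat ?N ?N (\<lambda>(i, j). fps_nth B (i + j)) = M1 * M2"
  proof (rule eq_matI)
    fix i j assume i: "i < dim_row (M1 * M2)" and j: "j < dim_col (M1 * M2)"
    then have i': "i < ?N" and j': "j < ?N" by (auto simp: M1_def M2_def)
    have "(M1 * M2) $$ (i, j) = (\<Sum>k\<in>{0..<?N}. (LL B i k * c ^ k) * LL B j k)"
      using i' j' by (simp add: M1_def M2_def scalar_prod_def)
    also have "\<dots> = (\<Sum>k<?N. LL B i k * (LL B j k * c ^ k))"
      by (simp add: atLeast0LessThan mult_ac del: sum.lessThan_Suc)
    also have "\<dots> = (\<Sum>k<Suc i. LL B i k * (LL B j k * c ^ k))"
      by (rule trunc_sum) (use i' in \<open>auto simp: LL_zero\<close>)
    also have "\<dots> = fps_nth B (i + j)" using G_eq[OF Beq, of i j] by (simp add: mult_ac)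
    finally show "mat ?N ?N (\<lambda>(i, j). fps_nth B (i + j)) $$ (i, j) = (M1 * M2) $$ (i, j)"
      using i' j' by simp
  qed (auto simp: M1_def M2_def)
  have d1: "det M1 = (\<Prod>i<?N. c ^ i)"
  proof -
    have "det M1 = prod_list (diag_mat M1)"
      by (rule det_lower_triangular[OF _ M1c]) (auto simp: M1_def LL_zero)
    also have "\<dots> = (\<Prod>i<?N. c ^ i)"
      by (simp add: diag_mat_def M1_def LL_diag[OF B0[OF Beq]] prod_list_upt0 del: prod.lessThan_Suc upt_Suc)
    finally show ?thesis .
  qed
  have d2: "det M2 = 1"
  proof -
    have "det M2 = prod_list (diag_mat M2)"
      by (rule det_upper_triangular[OF _ M2c]) (auto simp: M2_def upper_triangular_def LL_zero)
    also have "\<dots> = 1"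
      by (simp add: diag_mat_def M2_def LL_diag[OF B0[OF Beq]] prod_list_upt0 del: prod.lessThan_Suc upt_Suc)
    finally show ?thesis .
  qed
  have "det (mat ?N ?N (\<lambda>(i, j). fps_nth B (i + j))) = det M1 * det M2"
    unfolding H by (rule det_mult[OF M1c M2c])
  also have "\<dots> = c ^ (\<Sum>i<?N. i)" by (simp add: d1 d2 power_sum del: prod.lessThan_Suc sum.lessThan_Suc)
  also have "\<dots> = c ^ (?N choose 2)" by (simp only: sum_choose2)
  finally show ?thesis .
qed


theorem mainTheorem5:
  fixes p s t :: "'a::field"
  assumes "p \<noteq> 0"
  shows "is_Jfrac (\<lambda>_. s) (\<lambda>_. p * t) (Abs_fps (\<lambda>n. aseq p s t (n + 1) / p))
       \<and> (\<forall>n. hankel (\<lambda>n. aseq p s t (n + 1) / p) n = (p * t) ^ (Suc n choose 2))"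
proof -
  let ?B = "Abs_fps (\<lambda>n. aseq p s t (n + 1) / p)"
  have Beq: "?B = 1 + fps_const s * (fps_X * ?B) + fps_const (p*t) * (fps_X^2 * (?B * ?B))"
    by (rule B_eq[OF assms])
  have "hankel (\<lambda>n. aseq p s t (n + 1) / p) n = (p * t) ^ (Suc n choose 2)" for n
    using hankel_B[OF Beq, of n] by (simp add: hankel_def)
  then show ?thesis using jfrac_B[OF Beq] by blast
qed

end
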